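(* Let $n\ge 3$ and $k\in\{1,\dots,n-1\}$, and let $\Phi^{(n,k)}:M_n\to M_n$ be the linear map $$\Phi^{(n,k)}([a_{ij}])=\operatorname{diag}(b_1,\dots,b_n)-[a_{ij}],\qquad b_i=(n-1)a_{ii}+a_{\sigma_k(i),\sigma_k(i)},$$ where $\sigma_k(i)\equiv i+k \pmod n$ with $\sigma_k(i)\in\{1,\dots,n\}$. If $\gcd(n,k)\neq 1$, then $\Phi^{(n,k)}$ is not an extremal positive linear map.
   Context: $M_n$ denotes the algebra of complex $n\times n$ matrices. A linear map $\phi:M_n\to M_n$ is positive if it maps positive semidefinite matrices to positive semidefinite matrices; $\Phi^{(n,k)}$ is known to be positive. A positive linear map $\phi$ is extremal if whenever $\phi=\phi_1+\phi_2$ with $\phi_1,\phi_2$ positive linear maps, there are nonnegative reals $\lambda_i$ with $\phi_i=\lambda_i\phi$. *)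

theory Defs
  imports "Jordan_Normal_Form.Matrix" "HOL-Library.Complex_Order"
begin

definition psd :: "nat \<Rightarrow> complex mat \<Rightarrow> bool" where
  "psd n A \<longleftrightarrow> A \<in> carrier_mat n n \<and>
     (\<forall>x :: nat \<Rightarrow> complex. 0 \<le> (\<Sum>i<n. \<Sum>j<n. cnj (x i) * A $$ (i, j) * x j))"

definition linear_map_Mn :: "nat \<Rightarrow> (complex mat \<Rightarrow> complex mat) \<Rightarrow> bool" where
  "linear_map_Mn n \<phi> \<longleftrightarrow>
     (\<forall>A \<in> carrier_mat n n. \<phi> A \<in> carrier_mat n n) \<and>
     (\<forall>A \<in> carrier_mat n n. \<forall>B \<in> carrier_mat n n. \<phi> (A + B) = \<phi> A + \<phi> B) \<and>
     (\<forall>A \<in> carrier_mat n n. \<forall>c :: complex. \<phi> (c \<cdot>\<^sub>m A) = c \<cdot>\<^sub>m \<phi> A)"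

definition positive_map :: "nat \<Rightarrow> (complex mat \<Rightarrow> complex mat) \<Rightarrow> bool" where
  "positive_map n \<phi> \<longleftrightarrow> linear_map_Mn n \<phi> \<and> (\<forall>A. psd n A \<longrightarrow> psd n (\<phi> A))"

definition extremal_positive_map :: "nat \<Rightarrow> (complex mat \<Rightarrow> complex mat) \<Rightarrow> bool" where
  "extremal_positive_map n \<phi> \<longleftrightarrow> positive_map n \<phi> \<and>
     (\<forall>\<phi>1 \<phi>2. positive_map n \<phi>1 \<and> positive_map n \<phi>2 \<and>
        (\<forall>A \<in> carrier_mat n n. \<phi> A = \<phi>1 A + \<phi>2 A) \<longrightarrow>
        (\<exists>l1 l2 :: real. l1 \<ge> 0 \<and> l2 \<ge> 0 \<and>
           (\<forall>A \<in> carrier_mat n n. \<phi>1 A = complex_of_real l1 \<cdot>\<^sub>m \<phi> A \<and>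
                                  \<phi>2 A = complex_of_real l2 \<cdot>\<^sub>m \<phi> A)))"

text \<open>Indices are 0-based: index i in {0..n-1} corresponds to i+1 in the paper, and
 sigma_k(i) = (i + k) mod n.\<close>

definition Phi :: "nat \<Rightarrow> nat \<Rightarrow> complex mat \<Rightarrow> complex mat" where
  "Phi n k A = mat n n (\<lambda>(i, j).
     (if i = j then of_nat (n - 1) * A $$ (i, i) + A $$ ((i + k) mod n, (i + k) mod n) else 0)
     - A $$ (i, j))"

end

theory Submission
  imports Defs "HOL-Analysis.Derivative"
begin


lemma tangent_powr:
  fixes g a :: real
  assumes "g > 0" "a \<ge> 1"
  shows "1 + a * (g - 1) \<le> g powr a"
proof -
  have "a * 1 powr (a - 1) * (g - 1) \<le> g powr a - 1 powr a"
    using assms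
    by (intro convex_on_imp_above_tangent[where A = "{0<..}"] powr_convex)
       (auto intro!: derivative_eq_intros simp: interior_open)
  thus ?thesis by simp
qed

lemma KL_step:
  fixes m s s2 u0 G H :: real
  assumes m: "m \<ge> 1"
    and IH: "s\<^sup>2 \<le> (m - 1) * s2 + m * G\<^sup>2"
    and CS: "s2 - 2 * u0 * s + m * u0\<^sup>2 \<ge> m * (G - u0)\<^sup>2"
    and B: "(m + 1) * H \<ge> 2 * m * G * u0 - (m - 1) * u0\<^sup>2"
  shows "(u0 + s)\<^sup>2 \<le> m * (u0\<^sup>2 + s2) + (m + 1) * H"
proof -
  have "(u0 + s)\<^sup>2 - (m * (u0\<^sup>2 + s2) + (m + 1) * H) \<le>
     (s\<^sup>2 - ((m - 1) * s2 + m * G\<^sup>2)) + (m * (G - u0)\<^sup>2 - (s2 - 2 * u0 * s + m * u0\<^sup>2))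
     + ((2 * m * G * u0 - (m - 1) * u0\<^sup>2) - (m + 1) * H)"
    by (simp add: power2_eq_square algebra_simps)
  thus ?thesis using IH CS B by linarith
qed

lemma KL:
  fixes u :: "'a \<Rightarrow> real"
  assumes "finite S" "S \<noteq> {}" "\<And>i. i \<in> S \<Longrightarrow> 0 \<le> u i"
  shows "(\<Sum>i\<in>S. u i)\<^sup>2 \<le> (real (card S) - 1) * (\<Sum>i\<in>S. (u i)\<^sup>2)
           + real (card S) * (\<Prod>i\<in>S. u i) powr (2 / real (card S))"
proof -
  obtain N where N: "card S = Suc N" using assms
    by (metis card_0_eq not0_implies_Suc)
  show ?thesis using assms N
  proof (induction N arbitrary: S)
    case 0
    then obtain a where S: "S = {a}" by (metis card_1_singletonE One_nat_def)
    have "0 \<le> u a" using 0 S by auto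
    then show ?case using S by simp
  next
    case (Suc N S)
    define M where "M = Suc N"
    obtain a where a: "a \<in> S" "u a = Min (u ` S)"
      using Suc.prems by (metis (mono_tags, lifting) Min_in finite_imageI image_iff image_is_empty)
    have amin: "\<And>t. t \<in> S \<Longrightarrow> u a \<le> u t" using a Suc.prems by simp
    define S' where "S' = S - {a}"
    have fS': "finite S'" using Suc.prems S'_def by simp
    have cS': "card S' = M" using Suc.prems a S'_def M_def by simp
    have neS': "S' \<noteq> {}" using cS' M_def by auto
    have nn': "\<And>i. i \<in> S' \<Longrightarrow> 0 \<le> u i" using Suc.prems S'_def by simp
    define u0 where "u0 = u a"
    define s where "s = (\<Sum>i\<in>S'. u i)"
    define s2 where "s2 = (\<Sum>i\<in>S'. (u i)\<^sup>2)"
    define P where "P = (\<Prod>i\<in>S'. u i)"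
    define G where "G = P powr (1 / real M)"
    have IH0: "s\<^sup>2 \<le> (real M - 1) * s2 + real M * P powr (2 / real M)"
      using Suc.IH[OF fS' neS' nn'] cS' M_def s_def s2_def P_def by simp
    have PG: "P powr (2 / real M) = G\<^sup>2"
      unfolding G_def power2_eq_square by (simp flip: powr_add)
    have IH: "s\<^sup>2 \<le> (real M - 1) * s2 + real M * G\<^sup>2" using IH0 PG by simp
    have sumS: "(\<Sum>i\<in>S. u i) = u0 + s" using a Suc.prems unfolding u0_def s_def S'_def
      by (simp add: sum.remove)
    have sum2S: "(\<Sum>i\<in>S. (u i)\<^sup>2) = u0\<^sup>2 + s2" using a Suc.prems unfolding u0_def s2_def S'_def
      by (simp add: sum.remove)
    have prodS: "(\<Prod>i\<in>S. u i) = u0 * P" using a Suc.prems unfolding u0_def P_def S'_def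
      by (simp add: prod.remove)
    have cardS: "real (card S) = real M + 1" using Suc.prems M_def by simp
    have Mpos: "real M \<ge> 1" using M_def by simp
    have u0nn: "0 \<le> u0" using Suc.prems a u0_def by simp
    have Pnn: "0 \<le> P" unfolding P_def using nn' by (simp add: prod_nonneg)
    have CS0: "(\<Sum>i\<in>S'. u i - u0)\<^sup>2 \<le> (\<Sum>i\<in>S'. (u i - u0)\<^sup>2) * real M"
      using sum_squared_le_sum_of_squares[of "\<lambda>i. u i - u0" S'] cS' by simp
    have CSa: "(\<Sum>i\<in>S'. u i - u0) = s - real M * u0"
      unfolding s_def using cS' by (simp add: sum_subtractf)
    have CSb: "(\<Sum>i\<in>S'. (u i - u0)\<^sup>2) = s2 - 2 * u0 * s + real M * u0\<^sup>2"
      unfolding s_def s2_def using cS'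
      by (simp add: power2_diff sum_subtractf sum.distrib sum_distrib_left sum_distrib_right algebra_simps)
    have AMGM: "P powr (1 / real M) \<le> (\<Sum>i\<in>S'. u i / real (card S'))"
      unfolding P_def using arith_geom_mean[of S' u] fS' neS' nn' cS' by simp
    hence AMGM': "real M * G \<le> s"
      unfolding G_def s_def using cS' Mpos by (simp add: sum_divide_distrib[symmetric] field_simps)
    show ?case
    proof (cases "u0 = 0")
      case True
      have "s\<^sup>2 \<le> s2 * real M"
        using sum_squared_le_sum_of_squares[of u S'] cS' s_def s2_def by simp
      then show ?thesis using True sumS sum2S prodS cardS by (simp add: algebra_simps)
    next
      case False
      hence u0p: "u0 > 0" using u0nn by simp
      have upos: "\<And>t. t \<in> S' \<Longrightarrow> u0 \<le> u t" using amin S'_def u0_def by simp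
      have "(\<Prod>i\<in>S'. u0) \<le> P" unfolding P_def using upos u0nn by (intro prod_mono) auto
      hence Pge: "u0 ^ M \<le> P" using cS' by simp
      have Ppos: "P > 0" using Pge u0p by (meson order.strict_trans2 zero_less_power)
      have "(u0 ^ M) powr (1 / real M) \<le> G" unfolding G_def using Pge u0p by (intro powr_mono2) auto
      moreover have "(u0 ^ M) powr (1 / real M) = u0"
        using u0p Mpos by (simp add: powr_realpow[symmetric] powr_powr)
      ultimately have Gge: "u0 \<le> G" by simp
      have CS: "s2 - 2 * u0 * s + real M * u0\<^sup>2 \<ge> real M * (G - u0)\<^sup>2"
      proof -
        have "real M * (G - u0) \<le> s - real M * u0" using AMGM' by (simp add: algebra_simps)
        moreover have "0 \<le> real M * (G - u0)" using Gge by simp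
        ultimately have "(real M * (G - u0))\<^sup>2 \<le> (s - real M * u0)\<^sup>2"
          by (simp add: power_mono)
        also have "\<dots> \<le> (s2 - 2 * u0 * s + real M * u0\<^sup>2) * real M"
          using CS0 CSa CSb by simp
        finally have "real M * (real M * (G - u0)\<^sup>2) \<le> real M * (s2 - 2 * u0 * s + real M * u0\<^sup>2)"
          by (simp add: power2_eq_square algebra_simps)
        thus ?thesis using Mpos by simp
      qed
      define g where "g = G / u0"
      have g1: "g \<ge> 1" using Gge u0p g_def by simp
      have Gg: "G = u0 * g" using g_def u0p by simp
      have PGM: "P = G powr real M" unfolding G_def using Ppos Mpos by (simp add: powr_powr)
      define H where "H = (u0 * P) powr (2 / (real M + 1))"
      have H: "H = u0\<^sup>2 * g powr (2 * real M / (real M + 1))"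
      proof -
        have "u0 * P = u0 powr (real M + 1) * g powr real M"
          using PGM Gg u0p by (simp add: powr_mult powr_add)
        hence "H = (u0 powr (real M + 1)) powr (2 / (real M + 1)) * (g powr real M) powr (2 / (real M + 1))"
          unfolding H_def by (simp add: powr_mult)
        also have "\<dots> = u0 powr 2 * g powr (2 * real M / (real M + 1))"
        proof -
          have "(real M + 1) * (2 / (real M + 1)) = 2" using Mpos by (simp add: field_simps)
          moreover have "real M * (2 / (real M + 1)) = 2 * real M / (real M + 1)" by simp
          ultimately show ?thesis by (simp only: powr_powr)
        qed
        also have "\<dots> = u0\<^sup>2 * g powr (2 * real M / (real M + 1))"
          using u0p by simp
        finally show ?thesis .
      qed
      have tan: "1 + (2 * real M / (real M + 1)) * (g - 1) \<le> g powr (2 * real M / (real M + 1))"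
        using g1 Mpos by (intro tangent_powr) (auto simp: field_simps)
      have B: "(real M + 1) * H \<ge> 2 * real M * G * u0 - (real M - 1) * u0\<^sup>2"
      proof -
        have "(real M + 1) * H \<ge> (real M + 1) * (u0\<^sup>2 * (1 + (2 * real M / (real M + 1)) * (g - 1)))"
          unfolding H using tan by (intro mult_left_mono) (auto intro: mult_left_mono)
        also have "(real M + 1) * (u0\<^sup>2 * (1 + (2 * real M / (real M + 1)) * (g - 1)))
             = 2 * real M * G * u0 - (real M - 1) * u0\<^sup>2"
          using Mpos Gg by (simp add: field_simps power2_eq_square)
        finally show ?thesis .
      qed
      have "(u0 + s)\<^sup>2 \<le> real M * (u0\<^sup>2 + s2) + (real M + 1) * H"
        by (rule KL_step[OF Mpos IH CS B])
      then show ?thesis using sumS sum2S prodS cardS H_def by simp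
    qed
  qed
qed


lemma perm_ineq:
  fixes c q :: "nat \<Rightarrow> real"
  assumes fin: "finite S" and ne: "S \<noteq> {}" and inj: "inj_on \<sigma> S" and img: "\<sigma> ` S = S"
    and c0: "\<And>i. i \<in> S \<Longrightarrow> c i \<ge> 0" and q0: "\<And>i. i \<in> S \<Longrightarrow> q i \<ge> 0"
  shows "(\<Sum>i\<in>S. sqrt (c i * q i))\<^sup>2 \<le> (real (card S) - 1) * (\<Sum>i\<in>S. c i * q i) + (\<Sum>i\<in>S. c (\<sigma> i) * q i)"
proof -
  define u where "u i = sqrt (c i * q i)" for i
  have u0: "\<And>i. i \<in> S \<Longrightarrow> 0 \<le> u i" unfolding u_def using c0 q0 by simp
  have u2: "\<And>i. i \<in> S \<Longrightarrow> (u i)\<^sup>2 = c i * q i" unfolding u_def using c0 q0 by simp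
  have KL1: "(\<Sum>i\<in>S. u i)\<^sup>2 \<le> (real (card S) - 1) * (\<Sum>i\<in>S. (u i)\<^sup>2)
           + real (card S) * (\<Prod>i\<in>S. u i) powr (2 / real (card S))"
    by (rule KL[OF fin ne u0])
  have s2: "(\<Sum>i\<in>S. (u i)\<^sup>2) = (\<Sum>i\<in>S. c i * q i)" using u2 by simp
  have x0: "\<And>i. i \<in> S \<Longrightarrow> 0 \<le> c (\<sigma> i) * q i"
  proof -
    fix i assume i: "i \<in> S"
    hence "\<sigma> i \<in> S" using img by blast
    thus "0 \<le> c (\<sigma> i) * q i" using c0 q0 i by simp
  qed
  have AM: "(\<Prod>i\<in>S. c (\<sigma> i) * q i) powr (1 / real (card S)) \<le> (\<Sum>i\<in>S. c (\<sigma> i) * q i / real (card S))"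
    using arith_geom_mean[of S "\<lambda>i. c (\<sigma> i) * q i"] fin ne x0 by simp
  have "(\<Prod>i\<in>S. c (\<sigma> i) * q i) = (\<Prod>i\<in>S. c (\<sigma> i)) * (\<Prod>i\<in>S. q i)"
    by (simp add: prod.distrib)
  also have "(\<Prod>i\<in>S. c (\<sigma> i)) = (\<Prod>i\<in>S. c i)"
    using prod.reindex[OF inj, of c] img by simp
  also have "(\<Prod>i\<in>S. c i) * (\<Prod>i\<in>S. q i) = (\<Prod>i\<in>S. (u i)\<^sup>2)"
    using u2 by (simp add: prod.distrib)
  also have "\<dots> = (\<Prod>i\<in>S. u i)\<^sup>2" by (simp add: prod_power_distrib)
  also have "\<dots> = (\<Prod>i\<in>S. u i) powr 2" using u0 by (simp add: prod_nonneg)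
  finally have "(\<Prod>i\<in>S. c (\<sigma> i) * q i) powr (1 / real (card S)) = (\<Prod>i\<in>S. u i) powr (2 / real (card S))"
    by (simp add: powr_powr)
  with AM have "real (card S) * (\<Prod>i\<in>S. u i) powr (2 / real (card S)) \<le> (\<Sum>i\<in>S. c (\<sigma> i) * q i)"
    using fin ne by (simp add: sum_divide_distrib[symmetric] field_simps card_gt_0_iff)
  moreover have "(\<Sum>i\<in>S. u i)\<^sup>2 \<le> (real (card S) - 1) * (\<Sum>i\<in>S. c i * q i)
           + real (card S) * (\<Prod>i\<in>S. u i) powr (2 / real (card S))"
    using KL1 unfolding s2 .
  moreover have eqS: "(\<Sum>i\<in>S. sqrt (c i * q i)) = (\<Sum>i\<in>S. u i)" by (simp add: u_def)
  ultimately show ?thesis unfolding eqS by linarith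
qed


definition QF :: "nat \<Rightarrow> complex mat \<Rightarrow> (nat \<Rightarrow> complex) \<Rightarrow> complex" where
  "QF n A x = (\<Sum>i<n. \<Sum>j<n. cnj (x i) * A $$ (i, j) * x j)"

lemma psd_QF: "psd n A \<Longrightarrow> Im (QF n A x) = 0 \<and> Re (QF n A x) \<ge> 0"
  unfolding psd_def QF_def by (auto simp: less_eq_complex_def)

lemma QF_two:
  assumes "i < n" "j < n" "i \<noteq> j"
  shows "QF n A (\<lambda>k. if k = i then \<alpha> else if k = j then \<beta> else 0) =
    cnj \<alpha> * A$$(i,i) * \<alpha> + cnj \<alpha> * A$$(i,j) * \<beta> + cnj \<beta> * A$$(j,i) * \<alpha> + cnj \<beta> * A$$(j,j) * \<beta>"
proof -
  have inner: "\<And>k. (\<Sum>l<n. cnj (if k = i then \<alpha> else if k = j then \<beta> else 0) * A $$ (k, l) * (if l = i then \<alpha> else if l = j then \<beta> else 0))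
     = cnj (if k = i then \<alpha> else if k = j then \<beta> else 0) * (A $$ (k, i) * \<alpha> + A $$ (k, j) * \<beta>)"
  proof -
    fix k
    have "(\<Sum>l<n. cnj (if k = i then \<alpha> else if k = j then \<beta> else 0) * A $$ (k, l) * (if l = i then \<alpha> else if l = j then \<beta> else 0))
      = (\<Sum>l\<in>{i,j}. cnj (if k = i then \<alpha> else if k = j then \<beta> else 0) * A $$ (k, l) * (if l = i then \<alpha> else if l = j then \<beta> else 0))"
      using assms by (intro sum.mono_neutral_right) auto
    also have "\<dots> = cnj (if k = i then \<alpha> else if k = j then \<beta> else 0) * (A $$ (k, i) * \<alpha> + A $$ (k, j) * \<beta>)"
      using assms by (simp add: algebra_simps)
    finally show "?thesis k" .
  qed
  have "QF n A (\<lambda>k. if k = i then \<alpha> else if k = j then \<beta> else 0) =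
     (\<Sum>k<n. cnj (if k = i then \<alpha> else if k = j then \<beta> else 0) * (A $$ (k, i) * \<alpha> + A $$ (k, j) * \<beta>))"
    unfolding QF_def using inner by simp
  also have "\<dots> = (\<Sum>k\<in>{i,j}. cnj (if k = i then \<alpha> else if k = j then \<beta> else 0) * (A $$ (k, i) * \<alpha> + A $$ (k, j) * \<beta>))"
    using assms by (intro sum.mono_neutral_right) auto
  also have "\<dots> = cnj \<alpha> * A$$(i,i) * \<alpha> + cnj \<alpha> * A$$(i,j) * \<beta> + cnj \<beta> * A$$(j,i) * \<alpha> + cnj \<beta> * A$$(j,j) * \<beta>"
    using assms by (simp add: algebra_simps)
  finally show ?thesis .
qed

lemma QF_one:
  assumes "i < n"
  shows "QF n A (\<lambda>k. if k = i then 1 else 0) = A$$(i,i)"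
proof -
  have inner: "\<And>k. (\<Sum>l<n. cnj (if k = i then 1 else 0) * A $$ (k, l) * (if l = i then 1 else 0))
      = (\<Sum>l\<in>{i}. cnj (if k = i then 1 else 0) * A $$ (k, l) * (if l = i then 1 else 0))"
    using assms by (intro sum.mono_neutral_right) auto
  have "QF n A (\<lambda>k. if k = i then 1 else 0) = (\<Sum>k<n. cnj (if k = i then 1 else 0) * A $$ (k, i))"
    unfolding QF_def inner by simp
  also have "\<dots> = (\<Sum>k\<in>{i}. cnj (if k = i then 1 else 0) * A $$ (k, i))"
    using assms by (intro sum.mono_neutral_right) auto
  finally show ?thesis by simp
qed

lemma psd_diag: assumes "psd n A" "i < n"
  shows "A$$(i,i) = complex_of_real (Re (A$$(i,i)))" "Re (A$$(i,i)) \<ge> 0"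
  using psd_QF[OF assms(1), of "\<lambda>k. if k = i then 1 else 0"] QF_one[OF assms(2), of A]
  by (auto simp: complex_eq_iff)

lemma real_quad_bound:
  fixes a b p :: real
  assumes "a \<ge> 0" "b \<ge> 0" "\<And>t. t > 0 \<Longrightarrow> t * p \<le> a + t\<^sup>2 * b"
  shows "p \<le> 2 * sqrt (a * b)"
proof (cases "a > 0 \<and> b > 0")
  case True
  define t where "t = sqrt (a / b)"
  have tp: "t > 0" using True t_def by simp
  have "t\<^sup>2 * b = a" using True t_def by simp
  hence "t * p \<le> 2 * a" using assms(3)[OF tp] by simp
  hence "p \<le> 2 * a / t" using tp by (simp add: field_simps)
  also have "2 * a / t = 2 * sqrt (a * b)"
  proof -
    have "sqrt (a * b) * t = sqrt (a * b * (a / b))" unfolding t_def by (rule real_sqrt_mult[symmetric])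
    moreover have "a * b * (a / b) = a\<^sup>2" using True by (simp add: power2_eq_square)
    ultimately have "sqrt (a * b) * t = a" using True by simp
    thus ?thesis using tp by (simp add: field_simps)
  qed
  finally show ?thesis .
next
  case False
  hence ab0: "a * b = 0" using assms by auto
  have "p \<le> 0"
  proof (rule ccontr)
    assume "\<not> p \<le> 0" hence pp: "p > 0" by simp
    show False
    proof (cases "b = 0")
      case True
      have "(a + 1) / p * p \<le> a" using assms(3)[of "(a+1)/p"] pp True assms(1) by simp
      thus False using pp by simp
    next
      case b: False
      hence a0: "a = 0" and bp: "b > 0" using ab0 assms by auto
      have "p / (2*b) * p \<le> (p / (2*b))\<^sup>2 * b" using assms(3)[of "p/(2*b)"] pp bp a0 by simp
      hence "p * p / (2 * b) \<le> p * p / (4 * b)" using bp by (simp add: power2_eq_square field_simps)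
      thus False using pp bp by (simp add: field_simps)
    qed
  qed
  moreover have "sqrt (a * b) = 0" using ab0 by simp
  ultimately show ?thesis by linarith
qed

lemma Re_cnj_real_mult: "Re (cnj z * complex_of_real c * z) = c * (cmod z)\<^sup>2"
proof -
  have "cnj z * complex_of_real c * z = complex_of_real (c * (cmod z)\<^sup>2)"
  proof -
    have "cnj z * complex_of_real c * z = complex_of_real c * (z * cnj z)" by (simp add: algebra_simps)
    also have "\<dots> = complex_of_real (c * (cmod z)\<^sup>2)" by (simp add: complex_norm_square[symmetric])
    finally show ?thesis .
  qed
  thus ?thesis by (metis Re_complex_of_real)
qed

lemma psd_pair:
  assumes A: "psd n A" and ij: "i < n" "j < n" "i \<noteq> j"
  shows "Re (cnj (y i) * A$$(i,j) * y j + cnj (y j) * A$$(j,i) * y i)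
     \<le> 2 * (cmod (y i) * sqrt (Re (A$$(i,i)))) * (cmod (y j) * sqrt (Re (A$$(j,j))))"
proof -
  define ci where "ci = Re (A$$(i,i))"
  define cj where "cj = Re (A$$(j,j))"
  have ai: "A$$(i,i) = complex_of_real ci" and ci0: "ci \<ge> 0"
    using psd_diag[OF A ij(1)] ci_def by auto
  have aj: "A$$(j,j) = complex_of_real cj" and cj0: "cj \<ge> 0"
    using psd_diag[OF A ij(2)] cj_def by auto
  define P where "P = cnj (y i) * A$$(i,j) * y j + cnj (y j) * A$$(j,i) * y i"
  define D1 where "D1 = cnj (y i) * A$$(i,i) * y i"
  define D2 where "D2 = cnj (y j) * A$$(j,j) * y j"
  have D1: "Re D1 = ci * (cmod (y i))\<^sup>2" unfolding D1_def ai by (rule Re_cnj_real_mult)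
  have D2: "Re D2 = cj * (cmod (y j))\<^sup>2" unfolding D2_def aj by (rule Re_cnj_real_mult)
  have key: "t * Re P \<le> ci * (cmod (y i))\<^sup>2 + t\<^sup>2 * (cj * (cmod (y j))\<^sup>2)" if t: "t > 0" for t
  proof -
    have "QF n A (\<lambda>k. if k = i then y i else if k = j then - (complex_of_real t * y j) else 0)
      = D1 - complex_of_real t * P + complex_of_real (t\<^sup>2) * D2"
      unfolding QF_two[OF ij] P_def D1_def D2_def by (simp add: algebra_simps power2_eq_square)
    moreover have "Re (QF n A (\<lambda>k. if k = i then y i else if k = j then - (complex_of_real t * y j) else 0)) \<ge> 0"
      using psd_QF[OF A] by blast
    ultimately have "0 \<le> Re D1 - t * Re P + t\<^sup>2 * Re D2"
      by simp
    thus ?thesis using D1 D2 by simp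
  qed
  have "Re P \<le> 2 * sqrt (ci * (cmod (y i))\<^sup>2 * (cj * (cmod (y j))\<^sup>2))"
    by (rule real_quad_bound) (use key ci0 cj0 in auto)
  also have "sqrt (ci * (cmod (y i))\<^sup>2 * (cj * (cmod (y j))\<^sup>2)) = (cmod (y i) * sqrt ci) * (cmod (y j) * sqrt cj)"
    by (simp add: real_sqrt_mult)
  finally show ?thesis unfolding P_def ci_def cj_def by (simp add: mult.assoc)
qed

lemma psd_QF_bound:
  assumes A: "psd n A"
  shows "Re (QF n A x) \<le> (\<Sum>k<n. cmod (x k) * sqrt (Re (A$$(k,k))))\<^sup>2"
proof -
  define w where "w k = cmod (x k) * sqrt (Re (A$$(k,k)))" for k
  define f where "f k l = cnj (x k) * A$$(k,l) * x l" for k l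
  have trm: "Re (f k l + f l k) \<le> 2 * (w k * w l)" if "k < n" "l < n" for k l
  proof (cases "k = l")
    case True
    have ak: "A$$(k,k) = complex_of_real (Re (A$$(k,k)))" "Re (A$$(k,k)) \<ge> 0"
      using psd_diag[OF A that(1)] by auto
    have "Re (f k k) = Re (A$$(k,k)) * (cmod (x k))\<^sup>2"
      unfolding f_def by (subst ak(1)) (rule Re_cnj_real_mult)
    moreover have "w k * w k = Re (A$$(k,k)) * (cmod (x k))\<^sup>2"
      unfolding w_def using ak(2) by (simp add: power2_eq_square algebra_simps)
    ultimately show ?thesis using True by simp
  next
    case False
    show ?thesis using psd_pair[OF A that False, of x] unfolding f_def w_def by (simp add: mult.assoc)
  qed
  have "2 * Re (QF n A x) = Re (\<Sum>k<n. \<Sum>l<n. f k l) + Re (\<Sum>k<n. \<Sum>l<n. f l k)"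
    unfolding QF_def f_def by (subst sum.swap[of _ "{..<n}"]) simp
  also have "\<dots> = (\<Sum>k<n. \<Sum>l<n. Re (f k l + f l k))"
    by (simp add: Re_sum sum.distrib)
  also have "\<dots> \<le> (\<Sum>k<n. \<Sum>l<n. 2 * (w k * w l))"
    using trm by (intro sum_mono) auto
  also have "\<dots> = 2 * (\<Sum>k<n. w k)\<^sup>2"
  proof -
    have "(\<Sum>k<n. w k)\<^sup>2 = (\<Sum>k<n. \<Sum>l<n. w k * w l)" by (simp add: power2_eq_square sum_product)
    thus ?thesis by (simp add: sum_distrib_left)
  qed
  finally show ?thesis unfolding w_def by simp
qed


definition Bm :: "nat \<Rightarrow> nat \<Rightarrow> nat \<Rightarrow> complex mat \<Rightarrow> complex mat" where
  "Bm n k d A = Matrix.mat n n (\<lambda>(i, j). if i mod d = j mod d then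
     (if i = j then of_nat (card {l. l < n \<and> l mod d = i mod d} - 1) * A $$ (i, i)
        + A $$ ((i + k) mod n, (i + k) mod n) else 0) - A $$ (i, j) else 0)"

definition Cm :: "nat \<Rightarrow> nat \<Rightarrow> complex mat \<Rightarrow> complex mat" where
  "Cm n d A = Matrix.mat n n (\<lambda>(i, j). if i mod d = j mod d then
     (if i = j then of_nat (card {l. l < n \<and> l mod d \<noteq> i mod d}) * A $$ (i, i) else 0)
     else - A $$ (i, j))"

lemma lin_Bm: assumes "n > 0" shows "linear_map_Mn n (Bm n k d)"
  unfolding linear_map_Mn_def
proof (intro conjI ballI allI)
  fix A :: "complex mat" assume "A \<in> carrier_mat n n" thus "Bm n k d A \<in> carrier_mat n n" by (simp add: Bm_def)
next
  fix A B :: "complex mat" assume "A \<in> carrier_mat n n" "B \<in> carrier_mat n n"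
  thus "Bm n k d (A + B) = Bm n k d A + Bm n k d B"
    using assms by (intro eq_matI) (simp_all add: Bm_def ring_distribs)
next
  fix A :: "complex mat" and c :: complex assume "A \<in> carrier_mat n n"
  thus "Bm n k d (c \<cdot>\<^sub>m A) = c \<cdot>\<^sub>m Bm n k d A"
    using assms by (intro eq_matI) (simp_all add: Bm_def ring_distribs)
qed

lemma lin_Cm: "linear_map_Mn n (Cm n d)"
  unfolding linear_map_Mn_def
proof (intro conjI ballI allI)
  fix A :: "complex mat" assume "A \<in> carrier_mat n n" thus "Cm n d A \<in> carrier_mat n n" by (simp add: Cm_def)
next
  fix A B :: "complex mat" assume "A \<in> carrier_mat n n" "B \<in> carrier_mat n n"
  thus "Cm n d (A + B) = Cm n d A + Cm n d B"
    by (intro eq_matI) (simp_all add: Cm_def ring_distribs)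
next
  fix A :: "complex mat" and c :: complex assume "A \<in> carrier_mat n n"
  thus "Cm n d (c \<cdot>\<^sub>m A) = c \<cdot>\<^sub>m Cm n d A"
    by (intro eq_matI) (simp_all add: Cm_def ring_distribs)
qed

lemma card_split:
  "card {l. l < n \<and> P l} + card {l. l < n \<and> \<not> P l} = n"
proof -
  have "{l. l < n \<and> P l} \<union> {l. l < n \<and> \<not> P l} = {..<n}" by auto
  moreover have "{l. l < n \<and> P l} \<inter> {l. l < n \<and> \<not> P l} = {}" by auto
  ultimately show ?thesis
    by (metis card_Un_disjoint card_lessThan finite_Collect_conjI finite_Collect_less_nat)
qed

lemma Phi_split:
  assumes "A \<in> carrier_mat n n"
  shows "Phi n k A = Bm n k d A + Cm n d A"
proof (rule eq_matI)
  fix i j assume ij: "i < dim_row (Bm n k d A + Cm n d A)" "j < dim_col (Bm n k d A + Cm n d A)"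
  hence i: "i < n" and j: "j < n" by (auto simp: Cm_def)
  define cs where "cs = card {l. l < n \<and> l mod d = i mod d}"
  define cc where "cc = card {l. l < n \<and> l mod d \<noteq> i mod d}"
  have "cs + cc = n" unfolding cs_def cc_def by (rule card_split)
  moreover have "cs \<ge> 1"
  proof -
    have "finite {l. l < n \<and> l mod d = i mod d}" by simp
    moreover have "i \<in> {l. l < n \<and> l mod d = i mod d}" using i by simp
    ultimately have "card {l. l < n \<and> l mod d = i mod d} > 0" using card_gt_0_iff by blast
    thus ?thesis unfolding cs_def by simp
  qed
  ultimately have e: "n - 1 = (cs - 1) + cc" by simp
  have ent: "(Bm n k d A + Cm n d A) $$ (i, j) = Bm n k d A $$ (i, j) + Cm n d A $$ (i, j)"
    using i j by (simp add: Bm_def Cm_def)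
  show "Phi n k A $$ (i, j) = (Bm n k d A + Cm n d A) $$ (i, j)"
  proof (cases "i mod d = j mod d")
    case same: True
    show ?thesis
    proof (cases "i = j")
      case True
      have p: "Phi n k A $$ (i, j) = of_nat (n - 1) * A $$ (i, i) + A $$ ((i + k) mod n, (i + k) mod n) - A $$ (i, i)"
        using i True by (simp add: Phi_def)
      have b: "Bm n k d A $$ (i, j) = of_nat (cs - 1) * A $$ (i, i) + A $$ ((i + k) mod n, (i + k) mod n) - A $$ (i, i)"
        using i True by (simp add: Bm_def cs_def)
      have c: "Cm n d A $$ (i, j) = of_nat cc * A $$ (i, i)"
        using i True by (simp add: Cm_def cc_def)
      show ?thesis unfolding ent p b c e of_nat_add by (simp add: algebra_simps)
    next
      case False
      thus ?thesis unfolding ent using i j same by (simp add: Phi_def Bm_def Cm_def)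
    qed
  next
    case False
    hence "i \<noteq> j" by auto
    thus ?thesis unfolding ent using i j False by (simp add: Phi_def Bm_def Cm_def)
  qed
qed (auto simp: Phi_def Cm_def)


lemma QF_nonneg: "psd n A \<Longrightarrow> 0 \<le> QF n A x"
  using psd_QF[of n A x] by (simp add: less_eq_complex_def)

lemma sum_if_const: "(\<Sum>j<(n::nat). if P j then c else 0) = of_nat (card {j. j < n \<and> P j}) * (c :: complex)"
proof -
  have "(\<Sum>j<n. if P j then c else 0) = (\<Sum>j\<in>{j\<in>{..<n}. P j}. c)"
    using sum.inter_filter[of "{..<n}" "\<lambda>_. c" P] by simp
  also have "{j\<in>{..<n}. P j} = {j. j < n \<and> P j}" by auto
  finally show ?thesis by simp
qed

lemma psd_Cm:
  assumes A: "psd n A"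
  shows "psd n (Cm n d A)"
proof -
  define D where "D y i = cnj (y i) * A $$ (i, i) * y i" for y i
  define E where "E y i j = cnj (y i) * A $$ (i, j) * y j" for y i j
  define cr where "cr i j = (i mod d \<noteq> j mod d)" for i j :: nat
  define cc where "cc i = card {l. l < n \<and> l mod d \<noteq> i mod d}" for i
  have crs: "cr i j = cr j i" for i j unfolding cr_def by auto
  have "0 \<le> QF n (Cm n d A) y" for y
  proof -
    have L1: "QF n (Cm n d A) y = (\<Sum>i<n. of_nat (cc i) * D y i) - (\<Sum>i<n. \<Sum>j<n. if cr i j then E y i j else 0)"
    proof -
      have pt: "cnj (y i) * Cm n d A $$ (i, j) * y j = (if j = i then of_nat (cc i) * D y i else 0) - (if cr i j then E y i j else 0)"
        if "i < n" "j < n" for i j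
        using that unfolding Cm_def D_def E_def cr_def cc_def by (auto simp: algebra_simps)
      have "QF n (Cm n d A) y = (\<Sum>i<n. \<Sum>j<n. (if j = i then of_nat (cc i) * D y i else 0) - (if cr i j then E y i j else 0))"
        unfolding QF_def using pt by (intro sum.cong refl) auto
      also have "\<dots> = (\<Sum>i<n. of_nat (cc i) * D y i - (\<Sum>j<n. if cr i j then E y i j else 0))"
        by (intro sum.cong refl) (simp add: sum_subtractf sum.delta)
      finally show ?thesis by (simp add: sum_subtractf)
    qed
    define z where "z i j = (\<lambda>l. if l = i then y i else if l = j then - y j else 0)" for i j
    have L2: "QF n A (z i j) = D y i - E y i j - E y j i + D y j" if "i < n" "j < n" "cr i j" for i j
    proof -
      have "i \<noteq> j" using that unfolding cr_def by auto
      thus ?thesis unfolding z_def QF_two[OF that(1,2) \<open>i \<noteq> j\<close>] D_def E_def by simp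
    qed
    define R where "R = (\<Sum>i<n. \<Sum>j<n. if cr i j then QF n A (z i j) else 0)"
    have R0: "0 \<le> R" unfolding R_def by (intro sum_nonneg) (auto intro: QF_nonneg[OF A])
    have "R = (\<Sum>i<n. \<Sum>j<n. (if cr i j then D y i else 0) + (if cr i j then D y j else 0)
               - (if cr i j then E y i j else 0) - (if cr i j then E y j i else 0))"
      unfolding R_def using L2 by (intro sum.cong refl) auto
    also have "\<dots> = (\<Sum>i<n. \<Sum>j<n. if cr i j then D y i else 0) + (\<Sum>i<n. \<Sum>j<n. if cr i j then D y j else 0)
               - (\<Sum>i<n. \<Sum>j<n. if cr i j then E y i j else 0) - (\<Sum>i<n. \<Sum>j<n. if cr i j then E y j i else 0)"
      by (simp add: sum.distrib sum_subtractf)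
    also have "(\<Sum>i<n. \<Sum>j<n. if cr i j then D y j else 0) = (\<Sum>i<n. \<Sum>j<n. if cr i j then D y i else 0)"
      by (subst sum.swap) (simp add: crs)
    also have "(\<Sum>i<n. \<Sum>j<n. if cr i j then E y j i else 0) = (\<Sum>i<n. \<Sum>j<n. if cr i j then E y i j else 0)"
      by (subst sum.swap) (simp add: crs)
    also have "(\<Sum>i<n. \<Sum>j<n. if cr i j then D y i else 0) = (\<Sum>i<n. of_nat (cc i) * D y i)"
    proof -
      have ceq: "\<And>i. {j. j < n \<and> i mod d \<noteq> j mod d} = {l. l < n \<and> l mod d \<noteq> i mod d}" by auto
      show ?thesis unfolding cc_def cr_def by (simp add: sum_if_const ceq)
    qed
    finally have "R = 2 * QF n (Cm n d A) y" unfolding L1 by (simp add: algebra_simps)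
    with R0 show ?thesis by (simp add: less_eq_complex_def)
  qed
  thus ?thesis unfolding psd_def QF_def by (simp add: Cm_def)
qed


lemma mod_shift_inj_aux: "(i::nat) \<le> j \<Longrightarrow> j < n \<Longrightarrow> (i + k) mod n = (j + k) mod n \<Longrightarrow> i = j"
proof -
  assume a: "i \<le> j" "j < n" "(i + k) mod n = (j + k) mod n"
  hence "n dvd (j + k) - (i + k)" using mod_eq_dvd_iff_nat[of "i+k" "j+k" n] by simp
  hence "n dvd j - i" by simp
  moreover have "j - i < n" using a by simp
  ultimately have "j - i = 0" using nat_dvd_not_less by (metis gr0I)
  thus ?thesis using a by simp
qed

lemma mod_shift_inj: "(i::nat) < n \<Longrightarrow> j < n \<Longrightarrow> (i + k) mod n = (j + k) mod n \<Longrightarrow> i = j"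
  by (metis mod_shift_inj_aux nat_le_linear order_le_less_trans)

lemma mod_shift_cls: "d dvd (n::nat) \<Longrightarrow> d dvd k \<Longrightarrow> (i + k) mod n mod d = i mod d"
  by (metis mod_add_self2 mod_mod_cancel dvd_def mult.commute mod_mult_self2)

lemma cnj_real_mult: "cnj z * complex_of_real c * z = complex_of_real (c * (cmod z)\<^sup>2)"
proof -
  have "cnj z * complex_of_real c * z = complex_of_real c * (z * cnj z)" by (simp add: algebra_simps)
  also have "\<dots> = complex_of_real (c * (cmod z)\<^sup>2)" by (simp add: complex_norm_square[symmetric])
  finally show ?thesis .
qed

lemma group_mod:
  fixes f :: "nat \<Rightarrow> 'b::comm_monoid_add"
  assumes "d > 0"
  shows "(\<Sum>i<n. f i) = (\<Sum>r<d. \<Sum>i\<in>{l. l < n \<and> l mod d = r}. f i)"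
proof -
  have "(\<Sum>r<d. \<Sum>i\<in>{l. l < n \<and> l mod d = r}. f i) = (\<Sum>r<d. \<Sum>i<n. if i mod d = r then f i else 0)"
  proof (rule sum.cong[OF refl])
    fix r
    have "{l. l < n \<and> l mod d = r} = {l\<in>{..<n}. l mod d = r}" by auto
    thus "(\<Sum>i\<in>{l. l < n \<and> l mod d = r}. f i) = (\<Sum>i<n. if i mod d = r then f i else 0)"
      using sum.inter_filter[of "{..<n}" f "\<lambda>l. l mod d = r"] by simp
  qed
  also have "\<dots> = (\<Sum>i<n. \<Sum>r<d. if i mod d = r then f i else 0)" by (rule sum.swap)
  also have "\<dots> = (\<Sum>i<n. f i)"
    using assms by (intro sum.cong refl) (simp add: sum.delta)
  finally show ?thesis by simp
qed

lemma psd_Bm: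
  assumes A: "psd n A" and d: "d > 0" "d dvd n" "d dvd k" and n: "n > 0"
  shows "psd n (Bm n k d A)"
proof -
  define \<sigma> where "\<sigma> i = (i + k) mod n" for i
  define c where "c i = Re (A $$ (i, i))" for i
  define S where "S r = {l. l < n \<and> l mod d = r}" for r
  have ac: "A $$ (i, i) = complex_of_real (c i)" "c i \<ge> 0" if "i < n" for i
    using psd_diag[OF A that] c_def by auto
  have \<sigma>n: "\<sigma> i < n" for i unfolding \<sigma>_def using n by simp
  have \<sigma>S: "\<sigma> i \<in> S r" if "i \<in> S r" for i r
    using that \<sigma>n mod_shift_cls[OF d(2,3)] unfolding S_def \<sigma>_def by auto
  have injS: "inj_on \<sigma> (S r)" for r
    unfolding inj_on_def S_def \<sigma>_def using mod_shift_inj by blast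
  have imgS: "\<sigma> ` S r = S r" for r
  proof -
    have "finite (S r)" unfolding S_def by simp
    moreover have "\<sigma> ` S r \<subseteq> S r" using \<sigma>S by blast
    ultimately show ?thesis using endo_inj_surj injS by blast
  qed
  have "0 \<le> QF n (Bm n k d A) y" for y
  proof -
    define W where "W i = of_nat (card {l. l < n \<and> l mod d = i mod d} - 1) * A $$ (i, i) + A $$ (\<sigma> i, \<sigma> i)" for i
    define E where "E i j = cnj (y i) * A $$ (i, j) * y j" for i j
    define yr where "yr r = (\<lambda>l. if l mod d = r then y l else 0)" for r
    have M1: "QF n (Bm n k d A) y = (\<Sum>i<n. cnj (y i) * W i * y i) - (\<Sum>i<n. \<Sum>j<n. if i mod d = j mod d then E i j else 0)"
    proof -
      have pt: "cnj (y i) * Bm n k d A $$ (i, j) * y j = (if j = i then cnj (y i) * W i * y i else 0) - (if i mod d = j mod d then E i j else 0)"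
        if "i < n" "j < n" for i j
        using that unfolding Bm_def W_def E_def \<sigma>_def by (auto simp: algebra_simps)
      have "QF n (Bm n k d A) y = (\<Sum>i<n. \<Sum>j<n. (if j = i then cnj (y i) * W i * y i else 0) - (if i mod d = j mod d then E i j else 0))"
        unfolding QF_def using pt by (intro sum.cong refl) auto
      also have "\<dots> = (\<Sum>i<n. cnj (y i) * W i * y i - (\<Sum>j<n. if i mod d = j mod d then E i j else 0))"
        by (intro sum.cong refl) (simp add: sum_subtractf sum.delta)
      finally show ?thesis by (simp add: sum_subtractf)
    qed
    have M2: "(\<Sum>i<n. \<Sum>j<n. if i mod d = j mod d then E i j else 0) = (\<Sum>r<d. QF n A (yr r))"
    proof -
      have "(\<Sum>r<d. QF n A (yr r)) = (\<Sum>r<d. \<Sum>i<n. \<Sum>j<n. if i mod d = r \<and> j mod d = r then E i j else 0)"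
        unfolding QF_def yr_def E_def by (intro sum.cong refl) auto
      also have "\<dots> = (\<Sum>i<n. \<Sum>r<d. \<Sum>j<n. if i mod d = r \<and> j mod d = r then E i j else 0)"
        by (rule sum.swap)
      also have "\<dots> = (\<Sum>i<n. \<Sum>j<n. \<Sum>r<d. if i mod d = r \<and> j mod d = r then E i j else 0)"
        by (intro sum.cong refl sum.swap)
      also have "\<dots> = (\<Sum>i<n. \<Sum>j<n. if i mod d = j mod d then E i j else 0)"
      proof (intro sum.cong refl)
        fix i j
        have "(\<Sum>r<d. if i mod d = r \<and> j mod d = r then E i j else 0) = (\<Sum>r<d. if i mod d = r then (if j mod d = i mod d then E i j else 0) else 0)"
          by (intro sum.cong refl) auto
        also have "\<dots> = (if j mod d = i mod d then E i j else 0)" using d(1) by (simp add: sum.delta)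
        finally show "(\<Sum>r<d. if i mod d = r \<and> j mod d = r then E i j else 0) = (if i mod d = j mod d then E i j else 0)"
          by auto
      qed
      finally show ?thesis by simp
    qed
    have M3: "(\<Sum>i<n. cnj (y i) * W i * y i) = (\<Sum>r<d. \<Sum>i\<in>S r. cnj (y i) * W i * y i)"
      unfolding S_def by (rule group_mod[OF d(1)])
    have QB: "QF n (Bm n k d A) y = (\<Sum>r<d. (\<Sum>i\<in>S r. cnj (y i) * W i * y i) - QF n A (yr r))"
      unfolding M1 M2 M3 by (simp add: sum_subtractf)
    have term0: "0 \<le> (\<Sum>i\<in>S r. cnj (y i) * W i * y i) - QF n A (yr r)" if r: "r < d" for r
    proof -
      define N where "N = card (S r)"
      define q where "q i = (cmod (y i))\<^sup>2" for i
      have finS: "finite (S r)" unfolding S_def by simp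
      have rn: "r < n" using r dvd_imp_le[OF d(2) n] by simp
      have rS: "r \<in> S r" unfolding S_def using rn r by simp
      hence neS: "S r \<noteq> {}" by auto
      have N1: "N \<ge> 1" unfolding N_def using finS rS by (metis One_nat_def Suc_leI card_gt_0_iff empty_iff)
      have Wi: "W i = complex_of_real ((real N - 1) * c i + c (\<sigma> i))" if i: "i \<in> S r" for i
      proof -
        have "{l. l < n \<and> l mod d = i mod d} = S r" using i unfolding S_def by auto
        moreover have "i < n" using i unfolding S_def by simp
        ultimately show ?thesis unfolding W_def using ac[of i] ac[OF \<sigma>n[of i]] N1 N_def
          by (simp add: of_nat_diff)
      qed
      have T: "(\<Sum>i\<in>S r. cnj (y i) * W i * y i) = complex_of_real (\<Sum>i\<in>S r. ((real N - 1) * c i + c (\<sigma> i)) * q i)"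
        unfolding of_real_sum by (intro sum.cong refl) (simp only: Wi cnj_real_mult q_def)
      define R where "R = Re (QF n A (yr r))"
      have QR: "QF n A (yr r) = complex_of_real R" using psd_QF[OF A, of "yr r"] R_def by (simp add: complex_eq_iff)
      have "R \<le> (\<Sum>l<n. cmod (yr r l) * sqrt (Re (A $$ (l, l))))\<^sup>2"
        unfolding R_def by (rule psd_QF_bound[OF A])
      also have "(\<Sum>l<n. cmod (yr r l) * sqrt (Re (A $$ (l, l)))) = (\<Sum>i\<in>S r. sqrt (c i * q i))"
      proof -
        have "(\<Sum>l<n. cmod (yr r l) * sqrt (Re (A $$ (l, l)))) = (\<Sum>l<n. if l mod d = r then cmod (y l) * sqrt (c l) else 0)"
          unfolding yr_def c_def by (intro sum.cong refl) auto
        also have "\<dots> = (\<Sum>l\<in>{l\<in>{..<n}. l mod d = r}. cmod (y l) * sqrt (c l))"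
          using sum.inter_filter[of "{..<n}" "\<lambda>l. cmod (y l) * sqrt (c l)" "\<lambda>l. l mod d = r"] by simp
        also have "{l\<in>{..<n}. l mod d = r} = S r" unfolding S_def by auto
        also have "(\<Sum>l\<in>S r. cmod (y l) * sqrt (c l)) = (\<Sum>i\<in>S r. sqrt (c i * q i))"
          unfolding q_def by (intro sum.cong refl) (simp add: real_sqrt_mult)
        finally show ?thesis .
      qed
      also have "(\<Sum>i\<in>S r. sqrt (c i * q i))\<^sup>2 \<le> (real (card (S r)) - 1) * (\<Sum>i\<in>S r. c i * q i) + (\<Sum>i\<in>S r. c (\<sigma> i) * q i)"
        by (rule perm_ineq[OF finS neS injS imgS]) (auto simp: S_def q_def intro: ac(2))
      also have "\<dots> = (\<Sum>i\<in>S r. ((real N - 1) * c i + c (\<sigma> i)) * q i)"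
        unfolding N_def by (simp add: sum.distrib[symmetric] sum_distrib_left algebra_simps)
      finally have "R \<le> (\<Sum>i\<in>S r. ((real N - 1) * c i + c (\<sigma> i)) * q i)" .
      thus ?thesis unfolding T QR by (simp add: less_eq_complex_def)
    qed
    show ?thesis unfolding QB by (rule sum_nonneg) (use term0 in auto)
  qed
  thus ?thesis unfolding psd_def QF_def by (simp add: Bm_def)
qed



theorem theorem2:
  fixes n k :: nat
  assumes "n \<ge> 3" and "1 \<le> k" and "k \<le> n - 1" and "gcd n k \<noteq> 1"
  shows "\<not> extremal_positive_map n (Phi n k)"
proof
  assume ext: "extremal_positive_map n (Phi n k)"
  define d where "d = gcd n k"
  have n0: "n > 0" using assms by simp
  have d0: "d > 0" unfolding d_def using n0 by simp
  have d2: "d \<ge> 2" using d0 assms(4) unfolding d_def by linarith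
  have dn: "d dvd n" and dk: "d dvd k" unfolding d_def by auto
  have dlek: "d \<le> k" using dk assms(2) by (simp add: dvd_imp_le)
  have dltn: "d < n" using dlek assms(3) n0 by simp
  have pB: "positive_map n (Bm n k d)"
    unfolding positive_map_def using lin_Bm[OF n0] psd_Bm[OF _ d0 dn dk n0] by blast
  have pC: "positive_map n (Cm n d)"
    unfolding positive_map_def using lin_Cm psd_Cm by blast
  have spl: "\<forall>A\<in>carrier_mat n n. Phi n k A = Bm n k d A + Cm n d A"
    using Phi_split by blast
  obtain l1 l2 :: real where l: "\<forall>A\<in>carrier_mat n n. Bm n k d A = complex_of_real l1 \<cdot>\<^sub>m Phi n k A"
    using ext pB pC spl unfolding extremal_positive_map_def by blast
  define A0 :: "complex mat" where "A0 = Matrix.mat n n (\<lambda>(i, j). if i = 0 \<and> (j = 1 \<or> j = d) then 1 else 0)"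
  have A0c: "A0 \<in> carrier_mat n n" unfolding A0_def by simp
  have eq: "Bm n k d A0 = complex_of_real l1 \<cdot>\<^sub>m Phi n k A0" using l A0c by blast
  have n1: "1 < n" using assms(1) by simp
  have "Bm n k d A0 $$ (0, 1) = 0" using n1 d2 unfolding Bm_def A0_def by simp
  moreover have "Phi n k A0 $$ (0, 1) = - 1" using n1 d2 unfolding Phi_def A0_def by simp
  ultimately have "complex_of_real l1 * (-1) = 0"
    using arg_cong[OF eq, of "\<lambda>M. M $$ (0, 1)"] n1 by (simp add: Phi_def)
  hence l10: "l1 = 0" by simp
  have "Bm n k d A0 $$ (0, d) = - 1" using dltn d2 unfolding Bm_def A0_def by simp
  moreover have "(complex_of_real l1 \<cdot>\<^sub>m Phi n k A0) $$ (0, d) = 0" using l10 dltn by (simp add: Phi_def)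
  ultimately show False using eq by simp
qed

end
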